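(* Let $q$ be a prime power, $N\ge n\ge 1$, and $1\le d\le n$. Then $\chi'_d(N\times n,q)=q^{Nd}$.
   Context: $\mathbb{F}_q^{N\times n}$ is the set of $N\times n$ matrices over the finite field $\mathbb{F}_q$, with rank distance $d_R(M_1,M_2)=\mathrm{Rk}(M_1-M_2)$. A $d$-distance coloring of $\mathbb{F}_q^{N\times n}$ is a map $\Gamma:\mathbb{F}_q^{N\times n}\to\{1,\dots,L\}$ such that $\Gamma(M_1)\ne\Gamma(M_2)$ whenever $M_1\neq M_2$ and $d_R(M_1,M_2)\le d$. $\chi'_d(N\times n,q)$ denotes the minimum number $L$ of colors in a $d$-distance coloring. *)

theory Defs
  imports "HOL-Analysis.Analysis"
begin

text \<open>N x n matrices over a field 'a are elements of type 'a^'n^'m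
  (N = CARD('m) rows, n = CARD('n) columns). Rank distance.\<close>

definition rank_dist :: "'a::field^'n^'m \<Rightarrow> 'a^'n^'m \<Rightarrow> nat" where
  "rank_dist M1 M2 = rank (M1 - M2)"

definition is_dist_coloring :: "nat \<Rightarrow> nat \<Rightarrow> ('a::field^'n^'m \<Rightarrow> nat) \<Rightarrow> bool" where
  "is_dist_coloring d L \<Gamma> \<longleftrightarrow>
     (\<forall>M. \<Gamma> M \<in> {1..L}) \<and>
     (\<forall>M1 M2. M1 \<noteq> M2 \<and> rank_dist M1 M2 \<le> d \<longrightarrow> \<Gamma> M1 \<noteq> \<Gamma> M2)"

definition chi_dist :: "nat \<Rightarrow> ('a::field^'n^'m) itself \<Rightarrow> nat" where
  "chi_dist d _ = (LEAST L. \<exists>\<Gamma> :: 'a^'n^'m \<Rightarrow> nat. is_dist_coloring d L \<Gamma>)"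

end

theory Submission
  imports Defs "HOL-Algebra.Algebraic_Closure_Type"
begin

lemma ff_pow_card: "(x::'a::{field,finite}) ^ CARD('a) = x"
proof (cases "x = 0")
  case False
  have "x * (\<Prod>y\<in>UNIV-{0}. x * y) = x * x ^ (card (UNIV :: 'a set) - 1) * \<Prod>(UNIV-{0})"
    by (simp add: prod.distrib mult_ac)
  also have "x * x ^ (card (UNIV :: 'a set) - 1) = x ^ Suc (card (UNIV :: 'a set) - 1)"
    by (subst power_Suc) auto
  also have "Suc (card (UNIV :: 'a set) - 1) = card (UNIV :: 'a set)"
    using finite_UNIV_card_ge_0[where ?'a = 'a] by simp
  also have "(\<Prod>y\<in>UNIV-{0}. x * y) = (\<Prod>y\<in>UNIV-{0}. y)"
    by (rule prod.reindex_bij_witness[of _ "\<lambda>y. y / x" "\<lambda>y. x * y"]) (use False in auto)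
  finally show ?thesis
    by simp
qed (use finite_UNIV_card_ge_0[where ?'a = 'a] in auto)

lemma ff_pow_card_pow: "(x::'a::{field,finite}) ^ (CARD('a) ^ i) = x"
  by (induction i) (simp_all add: ff_pow_card power_mult)

lemma ff_card_ge2: "CARD('a::{field,finite}) \<ge> 2"
proof -
  have "card {0,1::'a} \<le> CARD('a)" by (rule card_mono) auto
  thus ?thesis by simp
qed

lemma ff_of_nat_card: "of_nat CARD('a) = (0::'a::{field,finite})"
proof -
  have "(\<Sum>x\<in>UNIV. x + 1) = (\<Sum>x\<in>UNIV. x::'a)"
    by (rule sum.reindex_bij_witness[of _ "\<lambda>x. x - 1" "\<lambda>x. x + 1"]) auto
  thus ?thesis by (simp add: sum.distrib)
qed

lemma ff_binom:
  assumes "0 < k" "k < CARD('a::{field,finite})"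
  shows "of_nat (CARD('a) choose k) = (0::'a)"
proof -
  define q where "q = CARD('a)"
  have q2: "q \<ge> 2" unfolding q_def by (rule ff_card_ge2)
  define R :: "'a poly" where "R = (\<Sum>j\<in>{1..<q}. Polynomial.monom (of_nat (q choose j)) j)"
  have root: "poly R a = 0" for a :: 'a
  proof -
    have "(a + 1) ^ q = (\<Sum>j\<le>q. of_nat (q choose j) * a ^ j * 1 ^ (q - j))"
      by (rule binomial_ring)
    also have "{..q} = insert 0 (insert q {1..<q})" using q2 by auto
    also have "(\<Sum>j\<in>insert 0 (insert q {1..<q}). of_nat (q choose j) * a ^ j * 1 ^ (q - j))
        = 1 + (a ^ q + (\<Sum>j\<in>{1..<q}. of_nat (q choose j) * a ^ j))"
      using q2 by (subst sum.insert; simp)+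
    finally have "(a+1)^q = 1 + (a ^ q + poly R a)"
      by (simp add: R_def poly_sum poly_monom)
    moreover have "(a+1)^q = a + 1" "a ^ q = a" unfolding q_def by (rule ff_pow_card)+
    ultimately show ?thesis by (simp add: algebra_simps)
  qed
  have R0: "R = 0"
  proof (rule ccontr)
    assume "R \<noteq> 0"
    hence "card {x. poly R x = 0} \<le> Polynomial.degree R" by (rule card_poly_roots_bound)
    also have "Polynomial.degree R \<le> q - 1"
      unfolding R_def by (rule degree_sum_le) (auto intro: order.trans[OF degree_monom_le])
    finally show False using root q2 by (simp add: q_def)
  qed
  have "poly.coeff R k = of_nat (q choose k)"
    unfolding R_def coeff_sum using assms by (simp add: q_def)
  thus ?thesis using R0 by (simp add: q_def)
qed

lemma ac_binom:
  assumes "0 < k" "k < CARD('a::{field,finite})"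
  shows "of_nat (CARD('a) choose k) = (0::'a alg_closure)"
  by (metis ff_binom[OF assms] to_ac_0 to_ac_of_nat)

lemma ac_frob_add: "((x::'a::{field,finite} alg_closure) + y) ^ CARD('a) = x ^ CARD('a) + y ^ CARD('a)"
proof -
  define q where "q = CARD('a)"
  have q2: "q \<ge> 2" unfolding q_def by (rule ff_card_ge2)
  have "(x + y) ^ q = (\<Sum>j\<le>q. of_nat (q choose j) * x ^ j * y ^ (q - j))"
    by (rule binomial_ring)
  also have "{..q} = insert 0 (insert q {1..<q})" using q2 by auto
  also have "(\<Sum>j\<in>insert 0 (insert q {1..<q}). of_nat (q choose j) * x ^ j * y ^ (q - j))
        = y ^ q + (x ^ q + (\<Sum>j\<in>{1..<q}. of_nat (q choose j) * x ^ j * y ^ (q - j)))"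
    using q2 by (subst sum.insert; simp)+
  also have "(\<Sum>j\<in>{1..<q}. of_nat (q choose j) * x ^ j * y ^ (q - j)) = 0"
    by (rule sum.neutral) (auto simp: q_def ac_binom)
  finally show ?thesis by (simp add: q_def add.commute)
qed

lemma ac_frobi_add: "((x::'a::{field,finite} alg_closure) + y) ^ (CARD('a)^i) = x ^ (CARD('a)^i) + y ^ (CARD('a)^i)"
proof (induction i)
  case (Suc i)
  have e: "z ^ (CARD('a)^Suc i) = (z ^ (CARD('a)^i)) ^ CARD('a)" for z :: "'a alg_closure"
    by (simp add: power_mult[symmetric] mult.commute)
  show ?case unfolding e Suc ac_frob_add ..
qed simp

lemma ac_frobi_sum: "(\<Sum>j\<in>A. f j :: 'a::{field,finite} alg_closure) ^ (CARD('a)^i) = (\<Sum>j\<in>A. f j ^ (CARD('a)^i))"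
proof (induction A rule: infinite_finite_induct)
  case (infinite A) thus ?case by simp
next
  case empty thus ?case by simp
next
  case (insert x F) thus ?case by (simp add: ac_frobi_add)
qed

lemma ac_frobi_to_ac: "to_ac (a::'a::{field,finite}) ^ (CARD('a)^i) = to_ac a"
  by (metis ff_pow_card_pow to_ac_power)

lemma ac_of_nat_card: "of_nat CARD('a::{field,finite}) = (0::'a alg_closure)"
  by (metis ff_of_nat_card to_ac_0 to_ac_of_nat)

definition lp :: "nat \<Rightarrow> (nat \<Rightarrow> 'a::{field,finite} alg_closure) \<Rightarrow> 'a alg_closure \<Rightarrow> 'a alg_closure" where
  "lp k c x = (\<Sum>i<k. c i * x ^ (CARD('a)^i))"

lemma lp_add: "lp k c (x + y) = lp k c x + lp k c y"
  by (simp add: lp_def ac_frobi_add distrib_left sum.distrib)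

lemma lp_scale: "lp k c (to_ac a * x) = to_ac a * lp k c x"
  by (simp add: lp_def power_mult_distrib ac_frobi_to_ac sum_distrib_left mult_ac)

lemma card_pow_pos: "0 < CARD('a::finite) ^ i"
  by simp

lemma lp_zero [simp]: "lp k c 0 = 0"
  by (simp add: lp_def zero_power)

lemma lp_sum: "lp k c (\<Sum>j\<in>A. f j) = (\<Sum>j\<in>A. lp k c (f j))"
  by (induction A rule: infinite_finite_induct) (simp_all add: lp_add)

lemma lp_diff: "lp k c (x - y) = lp k c x - lp k c y"
  by (metis add_diff_cancel diff_add_cancel lp_add)

lemma lp_cdiff: "lp k (\<lambda>i. c i - c' i) x = lp k c x - lp k c' x"
  by (simp add: lp_def sum_subtractf left_diff_distrib)

lemma pow_comm: "((x::'b::comm_monoid_mult) ^ a) ^ b = (x ^ b) ^ a"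
  by (simp add: power_mult[symmetric] mult.commute)

lemma lp_in_K:
  fixes c :: "nat \<Rightarrow> 'a::{field,finite} alg_closure"
  assumes "\<And>i. i < k \<Longrightarrow> c i ^ (CARD('a)^N) = c i" "x ^ (CARD('a)^N) = x"
  shows "lp k c x ^ (CARD('a)^N) = lp k c x"
proof -
  have "lp k c x ^ (CARD('a)^N) = (\<Sum>i<k. (c i * x ^ (CARD('a)^i)) ^ (CARD('a)^N))"
    unfolding lp_def by (rule ac_frobi_sum)
  also have "\<dots> = lp k c x"
    unfolding lp_def
    by (rule sum.cong) (simp_all add: power_mult_distrib assms pow_comm[of x "CARD('a)^_" "CARD('a)^N"])
  finally show ?thesis .
qed

lemma lp_roots:
  fixes c :: "nat \<Rightarrow> 'a::{field,finite} alg_closure"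
  assumes "i0 < k" "c i0 \<noteq> 0"
  shows "finite {x. lp k c x = 0} \<and> card {x. lp k c x = 0} \<le> CARD('a)^(k-1)"
proof -
  define q where "q = CARD('a)"
  have q1: "1 < q" using ff_card_ge2[where 'a='a] by (simp add: q_def)
  have q0: "Suc 0 \<le> q" using q1 by simp
  define P where "P = (\<Sum>i<k. Polynomial.monom (c i) (q^i))"
  have pe: "{x. lp k c x = 0} = {x. poly P x = 0}"
    by (simp add: P_def lp_def poly_sum poly_monom q_def)
  have "poly.coeff P (q^i0) = (\<Sum>i<k. if i = i0 then c i else 0)"
    unfolding P_def coeff_sum using q1 by (simp add: power_inject_exp)
  also have "\<dots> = c i0" using assms(1) by simp
  finally have "P \<noteq> 0" using assms(2) by auto
  have "Polynomial.degree P \<le> q^(k-1)"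
    unfolding P_def
    by (rule degree_sum_le) (auto intro!: order.trans[OF degree_monom_le] power_increasing simp: q0)
  with card_poly_roots_bound[OF \<open>P \<noteq> 0\<close>] poly_roots_finite[OF \<open>P \<noteq> 0\<close>] pe
  show ?thesis by (simp add: q_def)
qed

lemma K_poly:
  fixes N :: nat
  assumes "N \<ge> 1"
  defines "Q \<equiv> CARD('a::{field,finite})^N"
  defines "P \<equiv> Polynomial.monom (1::'a alg_closure) Q - [:0,1:]"
  shows "Q \<ge> 2" "\<And>x. poly P x = x ^ Q - x" "poly.coeff P Q = 1" "Polynomial.degree P = Q" "P \<noteq> 0"
proof -
  have q2: "CARD('a) \<ge> 2" by (rule ff_card_ge2)
  have "CARD('a) ^ 1 \<le> CARD('a) ^ N" using assms(1) q2 by (intro power_increasing) auto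
  thus Q2: "Q \<ge> 2" using q2 by (simp add: Q_def)
  show "poly P x = x ^ Q - x" for x by (simp add: P_def poly_monom)
  show c: "poly.coeff P Q = 1" using Q2 by (simp add: P_def coeff_pCons split: nat.split)
  have "Polynomial.degree P \<le> Q" unfolding P_def
    by (rule degree_diff_le) (use Q2 in \<open>auto intro: degree_monom_le simp: degree_pCons_eq_if\<close>)
  moreover have "Q \<le> Polynomial.degree P" by (rule le_degree) (simp add: c)
  ultimately show "Polynomial.degree P = Q" by simp
  show "P \<noteq> 0" using c by auto
qed

lemma K_card_le:
  fixes N :: nat
  assumes "N \<ge> 1"
  shows "finite {x::'a::{field,finite} alg_closure. x^(CARD('a)^N) = x} \<and>
         card {x::'a alg_closure. x^(CARD('a)^N) = x} \<le> CARD('a)^N"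
proof -
  define Q where "Q = CARD('a)^N"
  define P where "P = Polynomial.monom (1::'a alg_closure) Q - [:0,1:]"
  note KP = K_poly[OF assms, where 'a='a, folded Q_def, folded P_def]
  have e: "{x::'a alg_closure. x^Q = x} = {x. poly P x = 0}" by (simp add: KP)
  show ?thesis
    using poly_roots_finite[OF KP(5)] card_poly_roots_bound[OF KP(5)] KP(4)
    unfolding Q_def[symmetric] e by simp
qed

lemma pderiv_sq_root:
  fixes u R :: "'b::idom poly"
  assumes "poly u x = 0"
  shows "poly (pderiv (u * (u * R))) x = 0"
  using assms by (simp add: pderiv_mult)

lemma K_card_ge:
  fixes N :: nat
  assumes "N \<ge> 1"
  shows "CARD('a)^N \<le> card {x::'a::{field,finite} alg_closure. x^(CARD('a)^N) = x}"
proof -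
  define Q where "Q = CARD('a)^N"
  define P where "P = Polynomial.monom (1::'a alg_closure) Q - [:0,1:]"
  note KP = K_poly[OF assms, where 'a='a, folded Q_def, folded P_def]
  have e: "{x::'a alg_closure. x^Q = x} = {x. poly P x = 0}" by (simp add: KP)
  have lc: "Polynomial.lead_coeff P = 1" using KP by simp
  obtain A where A: "size A = Q" "P = Polynomial.smult 1 (\<Prod>x\<in>#A. [:-x, 1:])"
    using alg_closed_imp_factorization[OF KP(5)] lc KP(4) by metis
  have ofQ: "of_nat Q = (0::'a alg_closure)"
    using assms by (simp add: Q_def ac_of_nat_card)
  have dP: "poly (pderiv P) x = -1" for x
    using ofQ by (simp add: P_def pderiv_diff pderiv_monom pderiv_pCons poly_monom)
  have cnt: "count A x \<le> 1" for x
  proof (rule ccontr)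
    assume "\<not> count A x \<le> 1"
    hence "{#x, x#} \<subseteq># A" by (simp add: subseteq_mset_def)
    hence "(\<Prod>y\<in>#{#x,x#}. [:-y, 1:]) dvd (\<Prod>y\<in>#A. [:-y, 1:])"
      by (intro prod_mset_subset_imp_dvd image_mset_subseteq_mono)
    hence "[:-x,1:] * [:-x,1:] dvd P" using A(2) by simp
    then obtain R where R0: "P = [:-x,1:] * [:-x,1:] * R" by (elim dvdE) 
    have R: "P = [:-x,1:] * ([:-x,1:] * R)" by (simp only: R0 mult.assoc)
    have "poly (pderiv P) x = 0" unfolding R by (rule pderiv_sq_root) simp
    thus False using dP[of x] by simp
  qed
  have "A = mset_set (set_mset A)"
  proof (rule multiset_eqI)
    fix x
    show "count A x = count (mset_set (set_mset A)) x"
    proof (cases "x \<in># A")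
      case True
      hence "0 < count A x" by simp
      with cnt[of x] have "count A x = 1" by linarith
      with True show ?thesis by (simp add: count_mset_set)
    next
      case False thus ?thesis by (simp add: count_mset_set not_in_iff)
    qed
  qed
  hence "size A = card (set_mset A)" by (metis size_mset_set)
  moreover have "set_mset A \<subseteq> {x. poly P x = 0}"
    using A(2) by (auto simp: poly_prod_mset prod_mset_zero_iff)
  ultimately have "Q \<le> card {x. poly P x = 0}"
    using A(1) by (metis card_mono poly_roots_finite[OF KP(5)])
  thus ?thesis using e Q_def by simp
qed

lemma basis_exists_K:
  fixes K :: "'a::{field,finite} alg_closure set"
  assumes fin: "finite K" and cardK: "CARD('a)^CARD('m::finite) \<le> card K"
  shows "\<exists>e::'m \<Rightarrow> 'a alg_closure. (\<forall>r. e r \<in> K) \<and>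
           (\<forall>t::'m \<Rightarrow> 'a. (\<Sum>r\<in>UNIV. to_ac (t r) * e r) = 0 \<longrightarrow> (\<forall>r. t r = 0))"
proof -
  have Kne: "K \<noteq> {}" using cardK by (auto simp: fin)
  have main: "\<exists>e::'m \<Rightarrow> 'a alg_closure. (\<forall>r. e r \<in> K) \<and>
           (\<forall>t::'m \<Rightarrow> 'a. (\<forall>r. r \<notin> S \<longrightarrow> t r = 0) \<longrightarrow> (\<Sum>r\<in>S. to_ac (t r) * e r) = 0 \<longrightarrow> (\<forall>r. t r = 0))"
    if "finite S" for S :: "'m set"
    using that
  proof (induction S rule: finite_induct)
    case empty
    obtain y where "y \<in> K" using Kne by blast
    thus ?case by (intro exI[of _ "\<lambda>_. y"]) auto
  next
    case (insert s F)
    from insert.IH obtain e where eK: "\<forall>r. e r \<in> K"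
      and eI: "\<forall>t::'m \<Rightarrow> 'a. (\<forall>r. r \<notin> F \<longrightarrow> t r = 0) \<longrightarrow> (\<Sum>r\<in>F. to_ac (t r) * e r) = 0 \<longrightarrow> (\<forall>r. t r = 0)"
      by blast
    define sp where "sp = (\<lambda>t. \<Sum>r\<in>F. to_ac (t r) * e r) ` (PiE F (\<lambda>_. UNIV :: 'a set))"
    have "card sp \<le> card (PiE F (\<lambda>_. UNIV :: 'a set))"
      unfolding sp_def by (rule card_image_le) (simp add: insert.hyps finite_PiE)
    also have "\<dots> = CARD('a) ^ card F" by (simp add: card_PiE insert.hyps)
    also have "\<dots> < CARD('a) ^ CARD('m)"
    proof (rule power_strict_increasing)
      have "F \<subset> UNIV" using insert.hyps by auto
      thus "card F < CARD('m)" by (metis psubset_card_mono finite)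
      show "1 < CARD('a)" using ff_card_ge2[where 'a='a] by simp
    qed
    finally have "card sp < card K" using cardK by linarith
    moreover have "finite sp" unfolding sp_def
      by (intro finite_imageI finite_PiE) (simp_all add: insert.hyps)
    ultimately have "\<not> K \<subseteq> sp" using card_mono[of sp K] by linarith
    then obtain y where yK: "y \<in> K" and ysp: "y \<notin> sp" by blast
    define e' where "e' = e(s := y)"
    show ?case
    proof (intro exI[of _ e'] conjI allI impI)
      show "e' r \<in> K" for r using eK yK by (simp add: e'_def)
      fix t :: "'m \<Rightarrow> 'a" and r
      assume t0: "\<forall>r. r \<notin> insert s F \<longrightarrow> t r = 0"
        and sum0: "(\<Sum>r\<in>insert s F. to_ac (t r) * e' r) = 0"
      have sF: "(\<Sum>r\<in>F. to_ac (t r) * e' r) = (\<Sum>r\<in>F. to_ac (t r) * e r)"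
        by (rule sum.cong) (use insert.hyps in \<open>auto simp: e'_def\<close>)
      have eq: "to_ac (t s) * y + (\<Sum>r\<in>F. to_ac (t r) * e r) = 0"
      proof -
        have "e' s = y" by (simp add: e'_def)
        thus ?thesis using sum0 insert.hyps by (simp add: sF)
      qed
      have ts: "t s = 0"
      proof (rule ccontr)
        assume ts0: "t s \<noteq> 0"
        define u where "u = restrict (\<lambda>r. - t r / t s) F"
        have "(\<Sum>r\<in>F. to_ac (u r) * e r) = (\<Sum>r\<in>F. - (to_ac (t r) * e r) / to_ac (t s))"
          by (rule sum.cong) (auto simp: u_def)
        also have "\<dots> = - (\<Sum>r\<in>F. to_ac (t r) * e r) / to_ac (t s)"
          by (simp add: sum_divide_distrib sum_negf)
        also have "\<dots> = y" using eq ts0 by (simp add: field_simps add_eq_0_iff2)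
        finally have "y \<in> sp" unfolding sp_def
          by (intro image_eqI[of _ _ u]) (auto simp: u_def)
        thus False using ysp by simp
      qed
      have a: "\<forall>r. r \<notin> F \<longrightarrow> t r = 0" using t0 ts by auto
      have b: "(\<Sum>r\<in>F. to_ac (t r) * e r) = 0" using eq ts by simp
      from eI a b show "t r = 0" by blast
    qed
  qed
  from main[of UNIV] show ?thesis by auto
qed

lemma rank_le_card:
  fixes D :: "'a::field^'n^'m"
  assumes "\<forall>i j. j \<notin> J \<longrightarrow> D$i$j = 0"
  shows "rank D \<le> card J"
proof -
  have rows: "rows D \<subseteq> vec.span ((\<lambda>j. axis j 1) ` J)"
  proof
    fix x assume "x \<in> rows D"
    then obtain i where x: "x = row i D" by (auto simp: rows_def)
    have "x = (\<Sum>j\<in>J. (D$i$j) *s axis j (1::'a))"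
    proof (rule vec_eq_iff[THEN iffD2], rule allI)
      fix k
      have "(\<Sum>j\<in>J. (D$i$j) *s axis j (1::'a)) $ k = (\<Sum>j\<in>J. if j = k then D$i$j else 0)"
        by (rule trans[OF sum_component], rule sum.cong) (auto simp: axis_def)
      also have "\<dots> = x $ k" using assms by (auto simp: x row_def sum.delta')
      finally show "x $ k = (\<Sum>j\<in>J. (D$i$j) *s axis j (1::'a)) $ k" by simp
    qed
    also have "\<dots> \<in> vec.span ((\<lambda>j. axis j 1) ` J)"
      by (intro vec.span_sum vec.span_scale vec.span_base) auto
    finally show "x \<in> vec.span ((\<lambda>j. axis j 1) ` J)" .
  qed
  have "rank D = vec.dim (rows D)" by (simp add: row_rank_def_gen)
  also have "\<dots> \<le> card ((\<lambda>j. axis j (1::'a)) ` J)"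
    by (rule vec.dim_le_card[OF rows]) simp
  also have "\<dots> \<le> card J" by (rule card_image_le) simp
  finally show ?thesis .
qed

lemma card_range_mult_le:
  fixes D :: "'a::{field,finite}^'n^'m"
  shows "card (range (\<lambda>v. D *v v)) \<le> CARD('a) ^ rank D"
proof -
  obtain B where B: "B \<subseteq> rows D" "vec.independent B" "rows D \<subseteq> vec.span B" "card B = vec.dim (rows D)"
    by (rule vec.basis_exists)
  have finB: "finite B" by simp
  have "\<forall>i. \<exists>u. D$i = (\<Sum>b\<in>B. u b *s b)"
  proof
    fix i
    have "row i D \<in> rows D" by (auto simp: rows_def)
    hence "row i D \<in> vec.span B" using B(3) by blast
    moreover have "row i D = D$i" by (simp add: row_def vec_eq_iff)
    ultimately show "\<exists>u. D$i = (\<Sum>b\<in>B. u b *s b)" using vec.span_finite[OF finB] by auto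
  qed
  then obtain \<alpha> where \<alpha>: "\<And>i. D$i = (\<Sum>b\<in>B. \<alpha> i b *s b)" by metis
  define G where "G = (\<lambda>t::'a^'n \<Rightarrow> 'a. \<chi> i. \<Sum>b\<in>B. \<alpha> i b * t b)"
  have rng: "range (\<lambda>v. D *v v) \<subseteq> G ` PiE B (\<lambda>_. UNIV)"
  proof clarify
    fix v :: "'a^'n"
    define t where "t = restrict (\<lambda>b. \<Sum>j\<in>UNIV. b$j * v$j) B"
    have "D *v v = G t"
    proof (rule vec_eq_iff[THEN iffD2], rule allI)
      fix i
      have "(D *v v) $ i = (\<Sum>j\<in>UNIV. (\<Sum>b\<in>B. \<alpha> i b * b$j) * v$j)"
        by (simp add: matrix_vector_mult_def \<alpha>[of i])
      also have "\<dots> = (\<Sum>b\<in>B. \<alpha> i b * (\<Sum>j\<in>UNIV. b$j * v$j))"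
        by (simp add: sum_distrib_left sum_distrib_right mult.assoc sum.swap[of _ UNIV])
      also have "\<dots> = G t $ i" by (simp add: G_def t_def)
      finally show "(D *v v) $ i = G t $ i" .
    qed
    moreover have "t \<in> PiE B (\<lambda>_. UNIV)" by (simp add: t_def)
    ultimately show "D *v v \<in> G ` PiE B (\<lambda>_. UNIV)" by blast
  qed
  have "card (range (\<lambda>v. D *v v)) \<le> card (G ` PiE B (\<lambda>_. UNIV :: 'a set))"
    by (rule card_mono[OF _ rng]) simp
  also have "\<dots> \<le> card (PiE B (\<lambda>_. UNIV :: 'a set))" by (rule card_image_le) (simp add: finite_PiE)
  also have "\<dots> = CARD('a) ^ card B" by (simp add: card_PiE)
  also have "card B = rank D" by (simp add: B(4) row_rank_def_gen)
  finally show ?thesis .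
qed

lemma indep_sigma:
  fixes e :: "'m::finite \<Rightarrow> 'a::{field,finite} alg_closure" and \<sigma> :: "'n \<Rightarrow> 'm" and t :: "'n \<Rightarrow> 'a"
  assumes indep: "\<forall>t::'m \<Rightarrow> 'a. (\<Sum>r\<in>UNIV. to_ac (t r) * e r) = 0 \<longrightarrow> (\<forall>r. t r = 0)"
    and inj: "inj \<sigma>" and fin: "finite A"
    and s0: "(\<Sum>j\<in>A. to_ac (t j) * e (\<sigma> j)) = 0" and jA: "j \<in> A"
  shows "t j = 0"
proof -
  define t' where "t' = (\<lambda>r. if r \<in> \<sigma> ` A then t (inv_into UNIV \<sigma> r) else 0)"
  have "(\<Sum>r\<in>UNIV. to_ac (t' r) * e r) = (\<Sum>r\<in>\<sigma> ` A. to_ac (t' r) * e r)"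
    by (rule sum.mono_neutral_right) (auto simp: t'_def)
  also have "\<dots> = (\<Sum>j\<in>A. to_ac (t' (\<sigma> j)) * e (\<sigma> j))"
    using sum.reindex[OF inj_on_subset[OF inj subset_UNIV], of "\<lambda>r. to_ac (t' r) * e r" A]
    by (simp add: o_def)
  also have "\<dots> = (\<Sum>j\<in>A. to_ac (t j) * e (\<sigma> j))"
    by (rule sum.cong) (auto simp: t'_def inv_into_f_f[OF inj])
  finally have "(\<Sum>r\<in>UNIV. to_ac (t' r) * e r) = 0" using s0 by simp
  hence "t' (\<sigma> j) = 0" using indep by blast
  thus ?thesis using jA by (simp add: t'_def inv_into_f_f[OF inj])
qed

lemma K_add: "(x::'a::{field,finite} alg_closure)^(CARD('a)^N) = x \<Longrightarrow> y^(CARD('a)^N) = y \<Longrightarrow> (x+y)^(CARD('a)^N) = x + y"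
  by (simp add: ac_frobi_add)

lemma K_mult: "(x::'a::{field,finite} alg_closure)^(CARD('a)^N) = x \<Longrightarrow> y^(CARD('a)^N) = y \<Longrightarrow> (x*y)^(CARD('a)^N) = x * y"
  by (simp add: power_mult_distrib)

lemma K_diff: "(x::'a::{field,finite} alg_closure)^(CARD('a)^N) = x \<Longrightarrow> y^(CARD('a)^N) = y \<Longrightarrow> (x-y)^(CARD('a)^N) = x - y"
proof -
  assume a: "x^(CARD('a)^N) = x" "y^(CARD('a)^N) = y"
  have "((x-y)+y)^(CARD('a)^N) = (x-y)^(CARD('a)^N) + y^(CARD('a)^N)" by (rule ac_frobi_add)
  hence "x = (x-y)^(CARD('a)^N) + y" using a by simp
  thus ?thesis by (simp add: eq_diff_eq)
qed

lemma K_sum: "(\<And>j. j \<in> A \<Longrightarrow> f j ^ (CARD('a)^N) = f j) \<Longrightarrow> (\<Sum>j\<in>A. f j :: 'a::{field,finite} alg_closure)^(CARD('a)^N) = (\<Sum>j\<in>A. f j)"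
  unfolding ac_frobi_sum by (rule sum.cong) auto

lemma interp:
  fixes e :: "'m::finite \<Rightarrow> 'a::{field,finite} alg_closure" and \<sigma> :: "'n::finite \<Rightarrow> 'm" and I :: "'n set"
    and x :: "'n \<Rightarrow> 'a alg_closure"
  assumes indep: "\<forall>t::'m \<Rightarrow> 'a. (\<Sum>r\<in>UNIV. to_ac (t r) * e r) = 0 \<longrightarrow> (\<forall>r. t r = 0)"
    and inj: "inj \<sigma>" and eK: "\<forall>r. e r ^ (CARD('a)^N) = e r" and N1: "N \<ge> 1"
    and cI: "card I = k"
    and xK: "\<forall>j. x j ^ (CARD('a)^N) = x j"
  shows "\<exists>c. (\<forall>i<k. c i ^ (CARD('a)^N) = c i) \<and> (\<forall>j\<in>I. lp k c (e (\<sigma> j)) = x j)"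
proof -
  define K where "K = {x::'a alg_closure. x^(CARD('a)^N) = x}"
  have finK: "finite K" using K_card_le[OF N1, where 'a='a] by (simp add: K_def)
  have q1: "1 < CARD('a)" using ff_card_ge2[where 'a='a] by simp
  define \<Psi> where "\<Psi> = (\<lambda>c. restrict (\<lambda>j. lp k c (e (\<sigma> j))) I)"
  define A where "A = PiE {..<k} (\<lambda>_. K)"
  define B where "B = PiE I (\<lambda>_. K)"
  have maps: "\<Psi> ` A \<subseteq> B"
    using eK by (auto simp: \<Psi>_def A_def B_def K_def intro!: lp_in_K)
  have injA: "inj_on \<Psi> A"
  proof (rule inj_onI)
    fix c1 c2 assume c1: "c1 \<in> A" and c2: "c2 \<in> A" and eq: "\<Psi> c1 = \<Psi> c2"
    show "c1 = c2"
    proof (rule ccontr)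
      assume ne: "c1 \<noteq> c2"
      then obtain i0 where ne0: "c1 i0 \<noteq> c2 i0" by auto
      have i0: "i0 < k"
      proof (rule ccontr)
        assume "\<not> i0 < k"
        hence "c1 i0 = undefined" "c2 i0 = undefined" using c1 c2 by (auto simp: A_def PiE_def extensional_def)
        thus False using ne0 by simp
      qed
      define c where "c = (\<lambda>i. c1 i - c2 i)"
      have ci0: "c i0 \<noteq> 0" using ne0 by (simp add: c_def)
      have z: "lp k c (e (\<sigma> j)) = 0" if "j \<in> I" for j
      proof -
        have "\<Psi> c1 j = \<Psi> c2 j" using eq by simp
        thus ?thesis using that by (simp add: \<Psi>_def c_def lp_cdiff)
      qed
      define H where "H = (\<lambda>t. \<Sum>j\<in>I. to_ac (t j) * e (\<sigma> j))"
      have Hr: "H ` PiE I (\<lambda>_. UNIV) \<subseteq> {y. lp k c y = 0}"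
        by (auto simp: H_def lp_sum lp_scale z)
      have Hinj: "inj_on H (PiE I (\<lambda>_. UNIV))"
      proof (rule inj_onI)
        fix t1 t2 assume t1: "t1 \<in> PiE I (\<lambda>_. UNIV)" and t2: "t2 \<in> PiE I (\<lambda>_. UNIV)" and "H t1 = H t2"
        hence "(\<Sum>j\<in>I. to_ac (t1 j - t2 j) * e (\<sigma> j)) = 0"
          by (simp add: H_def left_diff_distrib sum_subtractf)
        hence "t1 j - t2 j = 0" if "j \<in> I" for j
          using indep_sigma[OF indep inj _ _ that, of "\<lambda>j. t1 j - t2 j"] by simp
        thus "t1 = t2" using t1 t2 by (intro PiE_ext) auto
      qed
      have "CARD('a) ^ k = card (PiE I (\<lambda>_. UNIV :: 'a set))" by (simp add: card_PiE cI)
      also have "\<dots> = card (H ` PiE I (\<lambda>_. UNIV))" by (rule card_image[OF Hinj, symmetric])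
      also have "\<dots> \<le> card {y. lp k c y = 0}"
        using lp_roots[of i0 k c, OF i0 ci0] by (intro card_mono Hr) auto
      also have "\<dots> \<le> CARD('a) ^ (k - 1)" using lp_roots[of i0 k c, OF i0 ci0] by simp
      finally have "CARD('a) ^ k \<le> CARD('a) ^ (k - 1)" .
      hence "k \<le> k - 1" by (rule power_le_imp_le_exp[OF q1])
      thus False using i0 by simp
    qed
  qed
  have cardAB: "card A = card B" by (simp add: A_def B_def card_PiE cI finK)
  have imgAB: "\<Psi> ` A = B"
  proof (rule card_subset_eq[OF _ maps])
    show "finite B" by (simp add: B_def finite_PiE finK)
    show "card (\<Psi> ` A) = card B" using card_image[OF injA] cardAB by simp
  qed
  have xB: "restrict x I \<in> B" using xK by (auto simp: B_def K_def)
  obtain c where cA: "c \<in> A" and cx: "\<Psi> c = restrict x I"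
  proof -
    have "restrict x I \<in> \<Psi> ` A" using xB imgAB by simp
    then obtain c where "c \<in> A" "restrict x I = \<Psi> c" by (rule imageE)
    thus ?thesis using that[of c] by simp
  qed
  show ?thesis
  proof (intro exI[of _ c] conjI allI impI ballI)
    show "c i ^ (CARD('a)^N) = c i" if "i < k" for i using cA that by (auto simp: A_def K_def)
    show "lp k c (e (\<sigma> j)) = x j" if "j \<in> I" for j
    proof -
      have "\<Psi> c j = x j" using cx that by simp
      thus ?thesis using that by (simp add: \<Psi>_def)
    qed
  qed
qed

lemma key:
  fixes e :: "'m::finite \<Rightarrow> 'a::{field,finite} alg_closure" and \<sigma> :: "'n::finite \<Rightarrow> 'm"
    and c :: "nat \<Rightarrow> 'a alg_closure" and D :: "'a^'n^'m"
  assumes indep: "\<forall>t::'m \<Rightarrow> 'a. (\<Sum>r\<in>UNIV. to_ac (t r) * e r) = 0 \<longrightarrow> (\<forall>r. t r = 0)"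
    and inj: "inj \<sigma>"
    and hyp: "\<And>j. (\<Sum>r\<in>UNIV. to_ac (D$r$j) * e r) = lp k c (e (\<sigma> j))"
    and kd: "k = CARD('n) - d" and dn: "d \<le> CARD('n)"
    and Dne: "D \<noteq> 0"
  shows "d < rank D"
proof -
  define XD where "XD = (\<lambda>j. \<Sum>r\<in>UNIV. to_ac (D$r$j) * e r)"
  have q1: "1 < CARD('a)" using ff_card_ge2[where 'a='a] by simp
  obtain i0 where i0: "i0 < k" and ci0: "c i0 \<noteq> 0"
  proof (rule ccontr)
    assume "\<not> thesis"
    hence c0: "\<forall>i<k. c i = 0" using that by blast
    have "lp k c y = 0" for y by (simp add: lp_def c0)
    have "\<forall>r. D$r$j = 0" for j
    proof -
      have "(\<Sum>r\<in>UNIV. to_ac (D$r$j) * e r) = 0" using hyp[of j] \<open>\<And>y. lp k c y = 0\<close> by simp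
      from indep[rule_format, OF this] show ?thesis by blast
    qed
    hence "D = 0" by (simp add: vec_eq_iff)
    thus False using Dne by simp
  qed
  define \<Phi> where "\<Phi> = (\<lambda>v::'a^'n. \<Sum>j\<in>UNIV. to_ac (v$j) * XD j)"
  define E where "E = (\<lambda>w::'a^'m. \<Sum>r\<in>UNIV. to_ac (w$r) * e r)"
  define H where "H = (\<lambda>v::'a^'n. \<Sum>j\<in>UNIV. to_ac (v$j) * e (\<sigma> j))"
  have \<Phi>E: "\<Phi> v = E (D *v v)" for v
  proof -
    have "E (D *v v) = (\<Sum>r\<in>UNIV. to_ac (\<Sum>j\<in>UNIV. D$r$j * v$j) * e r)"
      by (simp add: E_def matrix_vector_mult_def)
    also have "\<dots> = (\<Sum>r\<in>UNIV. \<Sum>j\<in>UNIV. to_ac (v$j) * (to_ac (D$r$j) * e r))"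
    proof (rule sum.cong[OF refl])
      fix r
      have "to_ac (\<Sum>j\<in>UNIV. D$r$j * v$j) * e r = (\<Sum>j\<in>UNIV. to_ac (D$r$j) * to_ac (v$j) * e r)"
        by (simp add: to_ac_sum sum_distrib_right)
      also have "\<dots> = (\<Sum>j\<in>UNIV. to_ac (v$j) * (to_ac (D$r$j) * e r))"
        by (rule sum.cong[OF refl]) (simp add: ac_simps)
      finally show "to_ac (\<Sum>j\<in>UNIV. D$r$j * v$j) * e r = (\<Sum>j\<in>UNIV. to_ac (v$j) * (to_ac (D$r$j) * e r))" .
    qed
    also have "\<dots> = (\<Sum>j\<in>UNIV. \<Sum>r\<in>UNIV. to_ac (v$j) * (to_ac (D$r$j) * e r))"
      by (rule sum.swap)
    also have "\<dots> = \<Phi> v"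
      by (simp add: \<Phi>_def XD_def sum_distrib_left)
    finally show ?thesis by simp
  qed
  have \<Phi>H: "\<Phi> v = lp k c (H v)" for v
    by (simp add: \<Phi>_def H_def lp_sum lp_scale XD_def hyp)
  have Hinj: "v = w" if "H v = H w" for v w
  proof -
    have "(\<Sum>j\<in>UNIV. to_ac (v$j - w$j) * e (\<sigma> j)) = 0"
      using that by (simp add: H_def left_diff_distrib sum_subtractf)
    hence "v$j - w$j = 0" for j
      using indep_sigma[OF indep inj, of UNIV "\<lambda>j. v$j - w$j" j] by simp
    thus ?thesis by (simp add: vec_eq_iff)
  qed
  define R where "R = {y. lp k c y = 0}"
  have finR: "finite R" and cardR: "card R \<le> CARD('a)^(k-1)"
    using lp_roots[of i0 k c, OF i0 ci0] by (simp_all add: R_def)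
  have fib: "card {v. \<Phi> v = y} \<le> CARD('a)^(k-1)" for y
  proof (cases "{v. \<Phi> v = y} = {}")
    case True thus ?thesis by simp
  next
    case False
    then obtain v0 where v0: "\<Phi> v0 = y" by auto
    have "card {v. \<Phi> v = y} \<le> card R"
    proof (rule card_inj_on_le[of "\<lambda>v. H v - H v0"])
      show "inj_on (\<lambda>v. H v - H v0) {v. \<Phi> v = y}" by (rule inj_onI) (auto intro: Hinj)
      show "(\<lambda>v. H v - H v0) ` {v. \<Phi> v = y} \<subseteq> R"
        using v0 by (auto simp: R_def lp_diff \<Phi>H[symmetric])
      show "finite R" by (rule finR)
    qed
    thus ?thesis using cardR by simp
  qed
  have img: "card (range \<Phi>) \<le> CARD('a) ^ rank D"
  proof -
    have "range \<Phi> \<subseteq> E ` range (\<lambda>v. D *v v)" by (auto simp: \<Phi>E)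
    hence "card (range \<Phi>) \<le> card (E ` range (\<lambda>v. D *v v))" by (intro card_mono) auto
    also have "\<dots> \<le> card (range (\<lambda>v. D *v v))" by (rule card_image_le) simp
    also have "\<dots> \<le> CARD('a) ^ rank D" by (rule card_range_mult_le)
    finally show ?thesis .
  qed
  have "CARD('a) ^ CARD('n) = card (UNIV :: ('a^'n) set)" by (simp add: CARD_vec)
  also have "(UNIV :: ('a^'n) set) = (\<Union>y\<in>range \<Phi>. {v. \<Phi> v = y})" by auto
  also have "card \<dots> \<le> (\<Sum>y\<in>range \<Phi>. card {v. \<Phi> v = y})" by (rule card_UN_le) simp
  also have "\<dots> \<le> card (range \<Phi>) * CARD('a)^(k-1)"
    using sum_bounded_above[of "range \<Phi>" "\<lambda>y. card {v. \<Phi> v = y}", OF fib] by simp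
  also have "\<dots> \<le> CARD('a) ^ rank D * CARD('a)^(k-1)" using img by simp
  also have "\<dots> = CARD('a) ^ (rank D + (k - 1))" by (simp add: power_add)
  finally have "CARD('n) \<le> rank D + (k - 1)" by (rule power_le_imp_le_exp[OF q1])
  thus ?thesis using kd dn i0 by linarith
qed

lemma lower:
  fixes \<Gamma> :: "'a::{field,finite}^'n::finite^'m::finite \<Rightarrow> nat"
  assumes dn: "d \<le> CARD('n)" and col: "is_dist_coloring d L \<Gamma>"
  shows "CARD('a) ^ (CARD('m) * d) \<le> L"
proof -
  obtain J :: "'n set" where J: "card J = d"
    using obtain_subset_with_card_n[of d "UNIV :: 'n set"] dn by auto
  define F where "F = (\<lambda>f::'m \<times> 'n \<Rightarrow> 'a. (\<chi> i j. if j \<in> J then f (i,j) else 0) :: 'a^'n^'m)"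
  define P where "P = PiE ((UNIV :: 'm set) \<times> J) (\<lambda>_. UNIV :: 'a set)"
  have injF: "inj_on F P"
  proof (rule inj_onI)
    fix f g assume f: "f \<in> P" and g: "g \<in> P" and eq: "F f = F g"
    show "f = g"
    proof (rule PiE_ext[OF f[unfolded P_def] g[unfolded P_def]])
      fix x :: "'m \<times> 'n" assume x: "x \<in> UNIV \<times> J"
      obtain i j where ij: "x = (i,j)" by (cases x)
      have "F f $ i $ j = F g $ i $ j" using eq by simp
      thus "f x = g x" using x ij by (simp add: F_def)
    qed
  qed
  have cardP: "card (F ` P) = CARD('a) ^ (CARD('m) * d)"
  proof -
    have "card (F ` P) = card P" by (rule card_image[OF injF])
    also have "\<dots> = CARD('a) ^ card ((UNIV :: 'm set) \<times> J)" by (simp add: P_def card_PiE)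
    also have "card ((UNIV :: 'm set) \<times> J) = CARD('m) * d" by (simp add: card_cartesian_product J)
    finally show ?thesis .
  qed
  have injG: "inj_on \<Gamma> (F ` P)"
  proof (rule inj_onI, rule ccontr)
    fix M1 M2 assume M1: "M1 \<in> F ` P" and M2: "M2 \<in> F ` P" and eq: "\<Gamma> M1 = \<Gamma> M2" and ne: "M1 \<noteq> M2"
    have z: "\<forall>i j. j \<notin> J \<longrightarrow> (M1 - M2)$i$j = 0" using M1 M2 by (auto simp: F_def)
    have "rank_dist M1 M2 \<le> d" unfolding rank_dist_def using rank_le_card[OF z] J by simp
    thus False using col ne eq by (auto simp: is_dist_coloring_def)
  qed
  have "card (F ` P) = card (\<Gamma> ` F ` P)" by (rule card_image[OF injG, symmetric])
  also have "\<dots> \<le> card {1..L}" using col by (intro card_mono) (auto simp: is_dist_coloring_def)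
  finally show ?thesis using cardP by simp
qed

lemma upper:
  assumes nm: "CARD('n::finite) \<le> CARD('m::finite)" and dn: "d \<le> CARD('n)"
  shows "\<exists>\<Gamma> :: 'a::{field,finite}^'n^'m \<Rightarrow> nat. is_dist_coloring d (CARD('a)^(CARD('m)*d)) \<Gamma>"
proof -
  define N where "N = CARD('m)"
  have N1: "N \<ge> 1" by (simp add: N_def Suc_leI)
  define Q where "Q = CARD('a)^N"
  define K where "K = {x::'a alg_closure. x^Q = x}"
  have finK: "finite K" and cardK1: "card K \<le> Q"
    using K_card_le[OF N1, where 'a='a] by (simp_all add: K_def Q_def)
  have cardK2: "CARD('a)^CARD('m) \<le> card K"
    using K_card_ge[OF N1, where 'a='a] by (simp add: K_def Q_def N_def)
  obtain e :: "'m \<Rightarrow> 'a alg_closure" where eK: "\<forall>r. e r \<in> K"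
    and indep: "\<forall>t::'m \<Rightarrow> 'a. (\<Sum>r\<in>UNIV. to_ac (t r) * e r) = 0 \<longrightarrow> (\<forall>r. t r = 0)"
    using basis_exists_K[OF finK cardK2] by blast
  have eK': "\<forall>r. e r ^ (CARD('a)^N) = e r" using eK by (simp add: K_def Q_def)
  obtain \<sigma> :: "'n \<Rightarrow> 'm" where inj: "inj \<sigma>"
    using card_le_inj[of "UNIV :: 'n set" "UNIV :: 'm set"] nm by auto
  obtain J :: "'n set" where J: "card J = d"
    using obtain_subset_with_card_n[of d "UNIV :: 'n set"] dn by auto
  define I where "I = UNIV - J"
  define k where "k = CARD('n) - d"
  have cI: "card I = k" by (simp add: I_def k_def card_Diff_subset J)
  define XM where "XM = (\<lambda>(M::'a^'n^'m) j. \<Sum>r\<in>UNIV. to_ac (M$r$j) * e r)"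
  have XK: "XM M j ^ (CARD('a)^N) = XM M j" for M j
    unfolding XM_def
    by (rule K_sum) (use eK' in \<open>simp add: K_mult ac_frobi_to_ac\<close>)
  define cf where "cf = (\<lambda>x. SOME c. (\<forall>i<k. c i ^ (CARD('a)^N) = c i) \<and> (\<forall>j\<in>I. lp k c (e (\<sigma> j)) = x j))"
  have cfP: "(\<forall>i<k. cf (XM M) i ^ (CARD('a)^N) = cf (XM M) i) \<and> (\<forall>j\<in>I. lp k (cf (XM M)) (e (\<sigma> j)) = XM M j)" for M
  proof -
    have "\<exists>c. (\<forall>i<k. c i ^ (CARD('a)^N) = c i) \<and> (\<forall>j\<in>I. lp k c (e (\<sigma> j)) = XM M j)"
      by (rule interp[OF indep inj eK' N1 cI]) (simp add: XK)
    thus ?thesis unfolding cf_def by (rule someI_ex)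
  qed
  define g where "g = (\<lambda>M. restrict (\<lambda>j. XM M j - lp k (cf (XM M)) (e (\<sigma> j))) J)"
  define S where "S = PiE J (\<lambda>_. K)"
  have gS: "g M \<in> S" for M
  proof -
    have "(XM M j - lp k (cf (XM M)) (e (\<sigma> j))) ^ (CARD('a)^N) = XM M j - lp k (cf (XM M)) (e (\<sigma> j))" for j
      by (intro K_diff XK lp_in_K) (use cfP[of M] eK' in auto)
    thus ?thesis by (auto simp: g_def S_def K_def Q_def)
  qed
  have finS: "finite S" by (simp add: S_def finite_PiE finK)
  have cardS: "card S \<le> CARD('a)^(CARD('m)*d)"
  proof -
    have "card S = card K ^ d" by (simp add: S_def card_PiE J)
    also have "\<dots> \<le> Q ^ d" by (rule power_mono[OF cardK1]) simp
    also have "\<dots> = CARD('a)^(CARD('m)*d)" by (simp add: Q_def N_def power_mult)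
    finally show ?thesis .
  qed
  obtain \<phi> where \<phi>: "bij_betw \<phi> S {0..<card S}" using ex_bij_betw_finite_nat[OF finS] by blast
  define \<Gamma> where "\<Gamma> = (\<lambda>M. \<phi> (g M) + 1)"
  have range: "\<Gamma> M \<in> {1..CARD('a)^(CARD('m)*d)}" for M
  proof -
    have "\<phi> (g M) \<in> {0..<card S}" using \<phi> gS[of M] by (auto simp: bij_betw_def)
    thus ?thesis using cardS by (auto simp: \<Gamma>_def)
  qed
  have sep: "\<Gamma> M1 \<noteq> \<Gamma> M2" if ne: "M1 \<noteq> M2" and rd: "rank_dist M1 M2 \<le> d" for M1 M2
  proof
    assume "\<Gamma> M1 = \<Gamma> M2"
    hence "\<phi> (g M1) = \<phi> (g M2)" by (simp add: \<Gamma>_def)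
    hence geq: "g M1 = g M2"
      using bij_betw_imp_inj_on[OF \<phi>] gS by (auto dest: inj_onD)
    define D where "D = M1 - M2"
    define c where "c = (\<lambda>i. cf (XM M1) i - cf (XM M2) i)"
    have XD: "XM D j = XM M1 j - XM M2 j" for j
      by (simp add: XM_def D_def left_diff_distrib sum_subtractf)
    have hyp: "(\<Sum>r\<in>UNIV. to_ac (D$r$j) * e r) = lp k c (e (\<sigma> j))" for j
    proof -
      have "XM M1 j - XM M2 j = lp k (cf (XM M1)) (e (\<sigma> j)) - lp k (cf (XM M2)) (e (\<sigma> j))"
      proof (cases "j \<in> J")
        case True
        have "g M1 j = g M2 j" using geq by simp
        thus ?thesis using True by (simp add: g_def algebra_simps)
      next
        case False
        hence "j \<in> I" by (simp add: I_def)
        thus ?thesis using cfP[of M1] cfP[of M2] by simp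
      qed
      thus ?thesis using XD[of j] by (simp add: XM_def c_def lp_cdiff)
    qed
    have "D \<noteq> 0" using ne by (simp add: D_def)
    have "d < rank D" by (rule key[OF indep inj hyp k_def dn \<open>D \<noteq> 0\<close>])
    thus False using rd by (simp add: rank_dist_def D_def)
  qed
  have "is_dist_coloring d (CARD('a)^(CARD('m)*d)) \<Gamma>"
    unfolding is_dist_coloring_def using range sep by blast
  thus ?thesis by blast
qed

theorem theorem3p1:
  fixes d :: nat
  assumes "CARD('m::finite) \<ge> CARD('n::finite)"
    and "1 \<le> d" and "d \<le> CARD('n)"
  shows "chi_dist d TYPE('a::{field,finite}^'n^'m) = CARD('a) ^ (CARD('m) * d)"
  unfolding chi_dist_def
proof (rule Least_equality)
  show "\<exists>\<Gamma> :: 'a^'n^'m \<Rightarrow> nat. is_dist_coloring d (CARD('a) ^ (CARD('m) * d)) \<Gamma>"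
    by (rule upper[OF assms(1) assms(3)])
  show "CARD('a) ^ (CARD('m) * d) \<le> L" if "\<exists>\<Gamma> :: 'a^'n^'m \<Rightarrow> nat. is_dist_coloring d L \<Gamma>" for L
    using that lower[OF assms(3)] by blast
qed

end
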